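(* Let $(X,\le,\to,\rightsquigarrow,d,u)$ be a weakly involutive unital quantum B-algebra and let $(\exists,\forall)$ be a pair of strong synchronized maps on $X$ such that $\exists$ is a weak existential quantifier (equivalently, $\forall$ is a weak universal quantifier). Then for all $x,y\in X$: (1) $\forall(\forall x\to\forall y)=\forall x\to\forall y$ and $\forall(\forall x\rightsquigarrow\forall y)=\forall x\rightsquigarrow\forall y$; (2) $\exists(\exists x\to\exists y)=\exists x\to\exists y$ and $\exists(\exists x\rightsquigarrow\exists y)=\exists x\rightsquigarrow\exists y$; (3) $\forall(\forall x\odot\forall y)=\forall x\odot\forall y$; (4) $\exists(\exists x\odot\exists y)=\exists x\odot\exists y$; (5) $\forall((x\to\forall y)\rightsquigarrow\forall y)=(\forall x\to\forall y)\rightsquigarrow\forall y$ and $\forall((x\rightsquigarrow\forall y)\to\forall y)=(\forall x\rightsquigarrow\forall y)\to\forall y$.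
   Context: A quantum B-algebra is a partially ordered set $(X,\le)$ with two binary operations $\to$ and $\rightsquigarrow$ such that for all $x,y,z\in X$: $y\to z\le (x\to y)\to(x\to z)$; $y\rightsquigarrow z\le (x\rightsquigarrow y)\to(x\rightsquigarrow z)$; $y\le z$ implies $x\to y\le x\to z$; and $x\le y\to z$ iff $y\le x\rightsquigarrow z$. It is unital if there is $u\in X$ with $u\to x=u\rightsquigarrow x=x$ for all $x$. A pointed quantum B-algebra has a fixed $d\in X$; write $x^{-}=x\to d$, $x^{\sim}=x\rightsquigarrow d$; it is weakly involutive if $(x^{-})^{\sim}=(x^{\sim})^{-}=x$ for all $x$. In a weakly involutive quantum B-algebra define $x\odot y=(x\to y^{-})^{\sim}$ $(=(y\rightsquigarrow x^{\sim})^{-})$ and $x\oplus y=y^{\sim}\to x$ $(=x^{-}\rightsquigarrow y)$. A map $\tau:X\to X$ is good if $(\tau(x^{-}))^{\sim}=(\tau(x^{\sim}))^{-}$ for all $x$; good maps $\tau,\sigma$ are synchronized if $\sigma(x)=(\tau(x^{-}))^{\sim}=(\tau(x^{\sim}))^{-}$ for all $x$; they are strong synchronized if moreover $\tau\circ\sigma=\sigma$ (which for synchronized maps is equivalent to $\sigma\circ\tau=\tau$). A good map $\exists$ is a weak existential quantifier if for all $x,y$: $\exists d=d$; $\exists u=u$; $x\le\exists x$; $\exists(x\oplus\exists y)=\exists(\exists x\oplus y)=\exists x\oplus\exists y$; $\exists(x\oplus x)=\exists x\oplus\exists x$; $\exists(x\odot\exists y)=\exists(\exists x\odot y)=\exists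 x\odot\exists y$. A good map $\forall$ is a weak universal quantifier if for all $x,y$: $\forall u=u$; $\forall d=d$; $\forall x\le x$; $\forall(x\odot\forall y)=\forall(\forall x\odot y)=\forall x\odot\forall y$; $\forall(x\odot x)=\forall x\odot\forall x$; $\forall(x\oplus\forall y)=\forall(\forall x\oplus y)=\forall x\oplus\forall y$. *)

theory Defs
  imports Main
begin

definition quantum_B_algebra :: "('a::order \<Rightarrow> 'a \<Rightarrow> 'a) \<Rightarrow> ('a \<Rightarrow> 'a \<Rightarrow> 'a) \<Rightarrow> bool" where
  "quantum_B_algebra imp pimp \<longleftrightarrow>
     (\<forall>x y z. imp y z \<le> imp (imp x y) (imp x z)) \<and>
     (\<forall>x y z. pimp y z \<le> imp (pimp x y) (pimp x z)) \<and>
     (\<forall>x y z. y \<le> z \<longrightarrow> imp x y \<le> imp x z) \<and>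
     (\<forall>x y z. x \<le> imp y z \<longleftrightarrow> y \<le> pimp x z)"

definition unital :: "('a \<Rightarrow> 'a \<Rightarrow> 'a) \<Rightarrow> ('a \<Rightarrow> 'a \<Rightarrow> 'a) \<Rightarrow> 'a \<Rightarrow> bool" where
  "unital imp pimp u \<longleftrightarrow> (\<forall>x. imp u x = x \<and> pimp u x = x)"

definition weakly_involutive :: "('a \<Rightarrow> 'a \<Rightarrow> 'a) \<Rightarrow> ('a \<Rightarrow> 'a \<Rightarrow> 'a) \<Rightarrow> 'a \<Rightarrow> bool" where
  "weakly_involutive imp pimp d \<longleftrightarrow>
     (\<forall>x. pimp (imp x d) d = x \<and> imp (pimp x d) d = x)"

definition qodot :: "('a \<Rightarrow> 'a \<Rightarrow> 'a) \<Rightarrow> ('a \<Rightarrow> 'a \<Rightarrow> 'a) \<Rightarrow> 'a \<Rightarrow> 'a \<Rightarrow> 'a \<Rightarrow> 'a" where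
  "qodot imp pimp d x y = pimp (imp x (imp y d)) d"

definition qoplus :: "('a \<Rightarrow> 'a \<Rightarrow> 'a) \<Rightarrow> ('a \<Rightarrow> 'a \<Rightarrow> 'a) \<Rightarrow> 'a \<Rightarrow> 'a \<Rightarrow> 'a \<Rightarrow> 'a" where
  "qoplus imp pimp d x y = imp (pimp y d) x"

definition good_map :: "('a \<Rightarrow> 'a \<Rightarrow> 'a) \<Rightarrow> ('a \<Rightarrow> 'a \<Rightarrow> 'a) \<Rightarrow> 'a \<Rightarrow> ('a \<Rightarrow> 'a) \<Rightarrow> bool" where
  "good_map imp pimp d \<tau> \<longleftrightarrow> (\<forall>x. pimp (\<tau> (imp x d)) d = imp (\<tau> (pimp x d)) d)"

definition synchronized :: "('a \<Rightarrow> 'a \<Rightarrow> 'a) \<Rightarrow> ('a \<Rightarrow> 'a \<Rightarrow> 'a) \<Rightarrow> 'a \<Rightarrow> ('a \<Rightarrow> 'a) \<Rightarrow> ('a \<Rightarrow> 'a) \<Rightarrow> bool" where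
  "synchronized imp pimp d \<tau> \<sigma> \<longleftrightarrow>
     good_map imp pimp d \<tau> \<and> good_map imp pimp d \<sigma> \<and>
     (\<forall>x. \<sigma> x = pimp (\<tau> (imp x d)) d \<and> \<sigma> x = imp (\<tau> (pimp x d)) d)"

definition strong_synchronized :: "('a \<Rightarrow> 'a \<Rightarrow> 'a) \<Rightarrow> ('a \<Rightarrow> 'a \<Rightarrow> 'a) \<Rightarrow> 'a \<Rightarrow> ('a \<Rightarrow> 'a) \<Rightarrow> ('a \<Rightarrow> 'a) \<Rightarrow> bool" where
  "strong_synchronized imp pimp d \<tau> \<sigma> \<longleftrightarrow>
     synchronized imp pimp d \<tau> \<sigma> \<and> \<tau> \<circ> \<sigma> = \<sigma>"

definition weak_existential_quantifier ::
  "('a::order \<Rightarrow> 'a \<Rightarrow> 'a) \<Rightarrow> ('a \<Rightarrow> 'a \<Rightarrow> 'a) \<Rightarrow> 'a \<Rightarrow> 'a \<Rightarrow> ('a \<Rightarrow> 'a) \<Rightarrow> bool" where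
  "weak_existential_quantifier imp pimp d u E \<longleftrightarrow>
     good_map imp pimp d E \<and> E d = d \<and> E u = u \<and> (\<forall>x. x \<le> E x) \<and>
     (\<forall>x y. E (qoplus imp pimp d x (E y)) = qoplus imp pimp d (E x) (E y) \<and>
            E (qoplus imp pimp d (E x) y) = qoplus imp pimp d (E x) (E y)) \<and>
     (\<forall>x. E (qoplus imp pimp d x x) = qoplus imp pimp d (E x) (E x)) \<and>
     (\<forall>x y. E (qodot imp pimp d x (E y)) = qodot imp pimp d (E x) (E y) \<and>
            E (qodot imp pimp d (E x) y) = qodot imp pimp d (E x) (E y))"

definition weak_universal_quantifier ::
  "('a::order \<Rightarrow> 'a \<Rightarrow> 'a) \<Rightarrow> ('a \<Rightarrow> 'a \<Rightarrow> 'a) \<Rightarrow> 'a \<Rightarrow> 'a \<Rightarrow> ('a \<Rightarrow> 'a) \<Rightarrow> bool" where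
  "weak_universal_quantifier imp pimp d u A \<longleftrightarrow>
     good_map imp pimp d A \<and> A u = u \<and> A d = d \<and> (\<forall>x. A x \<le> x) \<and>
     (\<forall>x y. A (qodot imp pimp d x (A y)) = qodot imp pimp d (A x) (A y) \<and>
            A (qodot imp pimp d (A x) y) = qodot imp pimp d (A x) (A y)) \<and>
     (\<forall>x. A (qodot imp pimp d x x) = qodot imp pimp d (A x) (A x)) \<and>
     (\<forall>x y. A (qoplus imp pimp d x (A y)) = qoplus imp pimp d (A x) (A y) \<and>
            A (qoplus imp pimp d (A x) y) = qoplus imp pimp d (A x) (A y))"

end

theory Submission
  imports Defs
begin

lemma pimp_eq_imp:
  fixes imp pimp :: "'a::order \<Rightarrow> 'a \<Rightarrow> 'a"
  assumes Q: "quantum_B_algebra imp pimp" and W: "weakly_involutive imp pimp d"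
  shows "pimp = imp"
proof -
  have adj: "\<And>x y z. x \<le> imp y z \<longleftrightarrow> y \<le> pimp x z" using Q unfolding quantum_B_algebra_def by blast
  have a1: "\<And>x y z. imp y z \<le> imp (imp x y) (imp x z)" using Q unfolding quantum_B_algebra_def by blast
  have a2: "\<And>x y z. pimp y z \<le> imp (pimp x y) (pimp x z)" using Q unfolding quantum_B_algebra_def by blast
  have i1: "\<And>x. pimp (imp x d) d = x" and i2: "\<And>x. imp (pimp x d) d = x"
    using W unfolding weakly_involutive_def by auto
  have A1: "\<And>x y z. imp x y \<le> pimp (imp y z) (imp x z)" using a1 adj by blast
  have A2: "\<And>x y z. pimp x y \<le> pimp (pimp y z) (pimp x z)" using a2 adj by blast
  have le: "\<And>x y. imp x y \<le> pimp x y"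
  proof -
    fix x y
    have "imp x y \<le> pimp (imp y d) (imp x d)" by (rule A1)
    also have "\<dots> \<le> pimp (pimp (imp x d) d) (pimp (imp y d) d)" by (rule A2)
    finally show "imp x y \<le> pimp x y" by (simp add: i1)
  qed
  have sym: "\<And>w x y. w \<le> imp x y \<Longrightarrow> x \<le> imp w y"
    using le adj order_trans by metis
  show ?thesis
  proof (intro ext antisym)
    fix x y
    show "imp x y \<le> pimp x y" by (rule le)
    have "x \<le> imp (pimp x y) y" using adj by blast
    then show "pimp x y \<le> imp x y" by (rule sym)
  qed
qed

theorem proposition5p12:
  fixes imp pimp :: "'a::order \<Rightarrow> 'a \<Rightarrow> 'a" and d u :: 'a and E A :: "'a \<Rightarrow> 'a"
  assumes "quantum_B_algebra imp pimp"
    and "unital imp pimp u"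
    and "weakly_involutive imp pimp d"
    and "strong_synchronized imp pimp d E A"
    and "weak_existential_quantifier imp pimp d u E"
  shows "\<forall>x y.
     (A (imp (A x) (A y)) = imp (A x) (A y) \<and> A (pimp (A x) (A y)) = pimp (A x) (A y)) \<and>
     (E (imp (E x) (E y)) = imp (E x) (E y) \<and> E (pimp (E x) (E y)) = pimp (E x) (E y)) \<and>
     A (qodot imp pimp d (A x) (A y)) = qodot imp pimp d (A x) (A y) \<and>
     E (qodot imp pimp d (E x) (E y)) = qodot imp pimp d (E x) (E y) \<and>
     (A (pimp (imp x (A y)) (A y)) = pimp (imp (A x) (A y)) (A y) \<and>
      A (imp (pimp x (A y)) (A y)) = imp (pimp (A x) (A y)) (A y))"
proof -
  have P: "pimp = imp" using pimp_eq_imp assms(1,3) by blast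
  have adj: "\<And>x y z. x \<le> imp y z \<longleftrightarrow> y \<le> imp x z" using assms(1) unfolding P quantum_B_algebra_def by blast
  have a1: "\<And>x y z. imp y z \<le> imp (imp x y) (imp x z)" using assms(1) unfolding quantum_B_algebra_def by blast
  have nn: "\<And>x. imp (imp x d) d = x" using assms(3) unfolding P weakly_involutive_def by auto
  have A1: "\<And>x y z. imp x y \<le> imp (imp y z) (imp x z)" using a1 adj by blast
  have cp: "\<And>x y. imp x y = imp (imp y d) (imp x d)"
  proof -
    fix x y
    have "imp x y \<le> imp (imp y d) (imp x d)" by (rule A1)
    moreover have "imp (imp y d) (imp x d) \<le> imp (imp (imp x d) d) (imp (imp y d) d)" by (rule A1)
    ultimately show "imp x y = imp (imp y d) (imp x d)" by (simp add: nn antisym)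
  qed
  have ud: "imp u x = x" for x using assms(2) unfolding unital_def by auto
  have Au: "A x = imp (E (imp x d)) d" for x using assms(4) unfolding P strong_synchronized_def synchronized_def by auto
  have EA: "E (A x) = A x" for x using assms(4) unfolding strong_synchronized_def by (metis comp_apply)
  have odot: "qodot imp pimp d a b = imp (imp a (imp b d)) d" for a b unfolding qodot_def P ..
  have oplus: "qoplus imp pimp d a b = imp (imp b d) a" for a b unfolding qoplus_def P ..
  have Eq: "E u = u" "E d = d" using assms(5) unfolding weak_existential_quantifier_def by auto
  have Eplus: "E (qoplus imp pimp d (E x) y) = qoplus imp pimp d (E x) (E y)" for x y
    using assms(5) unfolding weak_existential_quantifier_def by blast
  have Edot1: "E (qodot imp pimp d x (E y)) = qodot imp pimp d (E x) (E y)" for x y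
    using assms(5) unfolding weak_existential_quantifier_def by blast
  have Edot2: "E (qodot imp pimp d (E x) y) = qodot imp pimp d (E x) (E y)" for x y
    using assms(5) unfolding weak_existential_quantifier_def by blast
  have ud': "imp u d = d" by (rule ud)
  have EE: "E (E x) = E x" for x
    using Edot2[of x u] by (simp add: odot Eq ud' nn)
  have nA: "imp (A x) d = E (imp x d)" for x by (simp add: Au nn)
  have nE: "imp (E x) d = A (imp x d)" for x by (metis nA nn)
  have Q2: "E (imp (E x) (E y)) = imp (E x) (E y)" for x y
  proof -
    have "E (imp (E x) (E y)) = E (qoplus imp pimp d (E y) (imp (E x) d))" by (simp add: oplus nn)
    also have "\<dots> = imp (imp (E (imp (E x) d)) d) (E y)" using Eplus[of y "imp (E x) d"] by (simp only: oplus)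
    also have "\<dots> = imp (E x) (E y)" by (metis nE EA nn)
    finally show ?thesis .
  qed
  have Q4: "E (qodot imp pimp d (E x) (E y)) = qodot imp pimp d (E x) (E y)" for x y
    using Edot2[of x "E y"] EE by simp
  have Q3: "A (qodot imp pimp d (A x) (A y)) = qodot imp pimp d (A x) (A y)" for x y
  proof -
    have "E (imp (A x) (imp (A y) d)) = imp (A x) (imp (A y) d)"
      using Q2[of "A x" "imp y d"] by (simp add: EA nA)
    then show ?thesis by (simp add: odot Au nn)
  qed
  have Q1: "A (imp (A x) (A y)) = imp (A x) (A y)" for x y
  proof -
    have "imp (imp (A x) (A y)) d = qodot imp pimp d (E (A x)) (E (imp y d))"
      by (simp add: odot EA nA[symmetric] nn)
    then have "E (imp (imp (A x) (A y)) d) = imp (imp (A x) (A y)) d" using Q4 by simp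
    then show ?thesis by (simp add: Au nn)
  qed
  have Ex1: "E (imp x (A y)) = imp (A x) (A y)" for x y
  proof -
    have "imp x (A y) = qoplus imp pimp d (E (A y)) (imp x d)" by (simp add: oplus nn EA)
    then have "E (imp x (A y)) = qoplus imp pimp d (E (A y)) (E (imp x d))" by (simp only: Eplus)
    also have "\<dots> = imp (imp (E (imp x d)) d) (A y)" by (simp only: oplus EA)
    also have "\<dots> = imp (A x) (A y)" by (simp only: Au)
    finally show ?thesis .
  qed
  have Q5: "A (imp (imp x (A y)) (A y)) = imp (imp (A x) (A y)) (A y)" for x y
  proof -
    define b where "b = E (imp y d)"
    have Ay: "A y = imp b d" by (simp add: b_def Au)
    have Eb: "E b = b" by (simp add: b_def EE)
    have "imp (imp (imp x (A y)) (A y)) d = qodot imp pimp d (E b) (imp x (A y))"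
      by (subst cp) (simp add: odot Ay nn Eb)
    then have "E (imp (imp (imp x (A y)) (A y)) d) = qodot imp pimp d b (imp (A x) (A y))"
      using Edot2[of b "imp x (A y)"] by (simp add: Eb Ex1)
    then have "A (imp (imp x (A y)) (A y)) = imp b (imp (imp (A x) (A y)) d)"
      by (simp add: Au odot nn)
    also have "\<dots> = imp (imp (A x) (A y)) (A y)" by (subst (2) cp) (simp add: Ay nn)
    finally show ?thesis .
  qed
  show ?thesis unfolding P using Q1 Q2 Q3 Q4 Q5 unfolding P by simp
qed

end
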